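(* For a ring $R$, the following are equivalent: (1) $R$ is a DT ring; (2) $R$ is a semi-tripotent ring; (3) for every $a\in R$ there exist an idempotent $e\in R$ and $j\in J(R)$ such that $a^2=e+j$.
   Context: All rings are associative with identity. $J(R)$ is the Jacobson radical, $U(R)$ the group of units. $\Delta(R)=\{x\in R: x+u\in U(R)\text{ for all }u\in U(R)\}$. $\mathrm{Tr}(R)=\{x\in R: x^3=x\}$. A ring $R$ is a DT ring if every $r\in R$ can be written $r=e+d$ with $e\in\mathrm{Tr}(R)$ and $d\in\Delta(R)$. A ring $R$ is semi-tripotent if every $r\in R$ can be written $r=e+j$ with $e\in\mathrm{Tr}(R)$ and $j\in J(R)$. *)

theory Defs
  imports Main
begin

definition units_of_ring :: "'a::ring_1 set" where
  "units_of_ring = {u. \<exists>v. u * v = 1 \<and> v * u = 1}"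

definition left_ideal :: "'a::ring_1 set \<Rightarrow> bool" where
  "left_ideal I \<longleftrightarrow> 0 \<in> I \<and> (\<forall>x\<in>I. \<forall>y\<in>I. x + y \<in> I) \<and> (\<forall>x\<in>I. - x \<in> I)
     \<and> (\<forall>r. \<forall>x\<in>I. r * x \<in> I)"

definition maximal_left_ideal :: "'a::ring_1 set \<Rightarrow> bool" where
  "maximal_left_ideal I \<longleftrightarrow> left_ideal I \<and> I \<noteq> UNIV
     \<and> (\<forall>K. left_ideal K \<and> I \<subseteq> K \<longrightarrow> K = I \<or> K = UNIV)"

definition jacobson :: "'a::ring_1 set" where
  "jacobson = \<Inter> {I. maximal_left_ideal I}"

definition Delta :: "'a::ring_1 set" where
  "Delta = {x. \<forall>u\<in>units_of_ring. x + u \<in> units_of_ring}"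

definition tripotents :: "'a::ring_1 set" where
  "tripotents = {x. x ^ 3 = x}"

definition DT_ring :: "'a::ring_1 itself \<Rightarrow> bool" where
  "DT_ring _ \<longleftrightarrow> (\<forall>r::'a. \<exists>e d. e \<in> tripotents \<and> d \<in> Delta \<and> r = e + d)"

definition semi_tripotent :: "'a::ring_1 itself \<Rightarrow> bool" where
  "semi_tripotent _ \<longleftrightarrow> (\<forall>r::'a. \<exists>e j. e \<in> tripotents \<and> j \<in> jacobson \<and> r = e + j)"

end

theory Submission
  imports Defs
begin

lemma unit_one: "(1::'a::ring_1) \<in> units_of_ring"
  by (auto simp: units_of_ring_def)

lemma unit_mult:
  fixes u v :: "'a::ring_1"
  assumes "u \<in> units_of_ring" "v \<in> units_of_ring" shows "u*v \<in> units_of_ring"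
proof -
  obtain u' where u: "u*u' = 1" "u'*u = 1" using assms(1) by (auto simp: units_of_ring_def)
  obtain v' where v: "v*v' = 1" "v'*v = 1" using assms(2) by (auto simp: units_of_ring_def)
  have "u*v*(v'*u') = u*(v*v')*u'" by (simp add: mult.assoc)
  also have "\<dots> = 1" using u v by simp
  finally have 1: "u*v*(v'*u') = 1" .
  have "v'*u'*(u*v) = v'*(u'*u)*v" by (simp add: mult.assoc)
  also have "\<dots> = 1" using u v by simp
  finally have 2: "v'*u'*(u*v) = 1" .
  show ?thesis using 1 2 by (auto simp: units_of_ring_def)
qed

lemma unit_neg:
  fixes u :: "'a::ring_1"
  assumes "u \<in> units_of_ring" shows "-u \<in> units_of_ring"
proof -
  obtain v where "u*v = 1" "v*u = 1" using assms by (auto simp: units_of_ring_def)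
  then have "(-u)*(-v) = 1" "(-v)*(-u) = 1" by simp_all
  then show ?thesis unfolding units_of_ring_def by blast
qed

lemma unit_lr:
  fixes x :: "'a::ring_1"
  assumes "x*p = 1" "q*x = 1" shows "x \<in> units_of_ring"
proof -
  have "q = q*(x*p)" using assms by simp
  also have "\<dots> = (q*x)*p" by (simp add: mult.assoc)
  also have "\<dots> = p" using assms by simp
  finally show ?thesis using assms by (auto simp: units_of_ring_def)
qed

lemma unit_invE:
  fixes u :: "'a::ring_1"
  assumes "u \<in> units_of_ring" obtains v where "u*v = 1" "v*u = 1"
  using assms by (auto simp: units_of_ring_def)

lemma jac_lemma:
  fixes a b :: "'a::ring_1"
  assumes "1 + a*b \<in> units_of_ring" shows "1 + b*a \<in> units_of_ring"
proof -
  obtain w where w: "(1+a*b)*w = 1" "w*(1+a*b) = 1" using assms by (rule unit_invE)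
  have "(1+b*a)*(1 - b*w*a) = 1 + b*a - b*((1+a*b)*w)*a"
    by (simp add: algebra_simps)
  also have "\<dots> = 1" using w by simp
  finally have 1: "(1+b*a)*(1 - b*w*a) = 1" .
  have "(1 - b*w*a)*(1+b*a) = 1 + b*a - b*(w*(1+a*b))*a"
    by (simp add: algebra_simps)
  also have "\<dots> = 1" using w by simp
  finally have 2: "(1 - b*w*a)*(1+b*a) = 1" .
  show ?thesis using 1 2 by (rule unit_lr)
qed

lemma delta_add:
  fixes d1 d2 :: "'a::ring_1"
  assumes "d1 \<in> Delta" "d2 \<in> Delta" shows "d1 + d2 \<in> Delta"
  using assms unfolding Delta_def by (auto simp: add.assoc)

lemma delta_neg:
  fixes d :: "'a::ring_1"
  assumes "d \<in> Delta" shows "- d \<in> Delta"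
  unfolding Delta_def
proof clarify
  fix u :: 'a assume "u \<in> units_of_ring"
  then have "d + - u \<in> units_of_ring" using assms unit_neg unfolding Delta_def by blast
  then have "- (d + - u) \<in> units_of_ring" by (rule unit_neg)
  then show "- d + u \<in> units_of_ring" by simp
qed

lemma delta_diff:
  fixes d1 d2 :: "'a::ring_1"
  assumes "d1 \<in> Delta" "d2 \<in> Delta" shows "d1 - d2 \<in> Delta"
  using delta_add[OF assms(1) delta_neg[OF assms(2)]] by simp

lemma delta_one:
  fixes d :: "'a::ring_1"
  assumes "d \<in> Delta" shows "1 + d \<in> units_of_ring"
  using assms unit_one unfolding Delta_def by (auto simp: add.commute)

lemma delta_lmult:
  fixes d u :: "'a::ring_1"
  assumes "u \<in> units_of_ring" "d \<in> Delta" shows "u*d \<in> Delta"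
  unfolding Delta_def
proof clarify
  fix w :: 'a assume w: "w \<in> units_of_ring"
  obtain ui where ui: "u*ui = 1" "ui*u = 1" using assms(1) by (rule unit_invE)
  have "ui \<in> units_of_ring" using ui by (auto simp: units_of_ring_def)
  then have "ui*w \<in> units_of_ring" using w unit_mult by blast
  then have "d + ui*w \<in> units_of_ring" using assms(2) unfolding Delta_def by blast
  then have "u*(d + ui*w) \<in> units_of_ring" using assms(1) unit_mult by blast
  moreover have "u*(d + ui*w) = u*d + w" using ui by (simp add: algebra_simps mult.assoc[symmetric])
  ultimately show "u*d + w \<in> units_of_ring" by simp
qed

lemma delta_rmult:
  fixes d u :: "'a::ring_1"
  assumes "u \<in> units_of_ring" "d \<in> Delta" shows "d*u \<in> Delta"
  unfolding Delta_def
proof clarify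
  fix w :: 'a assume w: "w \<in> units_of_ring"
  obtain ui where ui: "u*ui = 1" "ui*u = 1" using assms(1) by (rule unit_invE)
  have "ui \<in> units_of_ring" using ui by (auto simp: units_of_ring_def)
  then have "w*ui \<in> units_of_ring" using w unit_mult by blast
  then have "d + w*ui \<in> units_of_ring" using assms(2) unfolding Delta_def by blast
  then have "(d + w*ui)*u \<in> units_of_ring" using assms(1) unit_mult by blast
  moreover have "(d + w*ui)*u = d*u + w" using ui by (simp add: algebra_simps mult.assoc)
  ultimately show "d*u + w \<in> units_of_ring" by simp
qed


lemma jac_mem: "x \<in> jacobson \<longleftrightarrow> (\<forall>M. maximal_left_ideal M \<longrightarrow> x \<in> M)"
  by (auto simp: jacobson_def)

lemma J_add:
  fixes x y :: "'a::ring_1"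
  assumes "x \<in> jacobson" "y \<in> jacobson" shows "x + y \<in> jacobson"
  using assms by (auto simp: jac_mem maximal_left_ideal_def left_ideal_def)

lemma J_neg:
  fixes x :: "'a::ring_1"
  assumes "x \<in> jacobson" shows "- x \<in> jacobson"
  using assms by (auto simp: jac_mem maximal_left_ideal_def left_ideal_def)

lemma J_zero: "(0::'a::ring_1) \<in> jacobson"
  by (auto simp: jac_mem maximal_left_ideal_def left_ideal_def)

lemma J_diff:
  fixes x y :: "'a::ring_1"
  assumes "x \<in> jacobson" "y \<in> jacobson" shows "x - y \<in> jacobson"
  using J_add[OF assms(1) J_neg[OF assms(2)]] by simp

lemma char_rev:
  fixes x :: "'a::ring_1"
  assumes H: "\<forall>r. 1 + r*x \<in> units_of_ring" shows "x \<in> jacobson"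
  unfolding jac_mem
proof (intro allI impI, rule ccontr)
  fix M :: "'a set" assume M: "maximal_left_ideal M" and xM: "x \<notin> M"
  have LM: "left_ideal M" and MU: "M \<noteq> UNIV"
    and mx: "\<And>K. left_ideal K \<Longrightarrow> M \<subseteq> K \<Longrightarrow> K = M \<or> K = UNIV"
    using M by (auto simp: maximal_left_ideal_def)
  define K where "K = {m + r*x | m r. m \<in> M}"
  have "left_ideal K" unfolding left_ideal_def K_def
  proof (intro conjI ballI allI)
    show "0 \<in> {m + r * x |m r. m \<in> M}" using LM by (auto simp: left_ideal_def intro!: exI[of _ 0])
  next
    fix a b assume "a \<in> {m + r * x |m r. m \<in> M}" "b \<in> {m + r * x |m r. m \<in> M}"
    then obtain m1 r1 m2 r2 where "a = m1 + r1*x" "m1 \<in> M" "b = m2 + r2*x" "m2 \<in> M" by blast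
    moreover have "a + b = (m1+m2) + (r1+r2)*x" using calculation by (simp add: algebra_simps)
    moreover have "m1 + m2 \<in> M" using calculation LM by (auto simp: left_ideal_def)
    ultimately show "a + b \<in> {m + r * x |m r. m \<in> M}" by blast
  next
    fix a assume "a \<in> {m + r * x |m r. m \<in> M}"
    then obtain m1 r1 where "a = m1 + r1*x" "m1 \<in> M" by blast
    moreover have "- a = (-m1) + (-r1)*x" using calculation by (simp add: algebra_simps)
    moreover have "- m1 \<in> M" using calculation LM by (auto simp: left_ideal_def)
    ultimately show "- a \<in> {m + r * x |m r. m \<in> M}" by blast
  next
    fix s a assume "a \<in> {m + r * x |m r. m \<in> M}"
    then obtain m1 r1 where "a = m1 + r1*x" "m1 \<in> M" by blast
    moreover have "s * a = (s*m1) + (s*r1)*x" using calculation by (simp add: algebra_simps)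
    moreover have "s * m1 \<in> M" using calculation LM by (auto simp: left_ideal_def)
    ultimately show "s * a \<in> {m + r * x |m r. m \<in> M}" by blast
  qed
  moreover have "M \<subseteq> K" unfolding K_def
  proof
    fix y assume "y \<in> M" moreover have "y = y + 0*x" by simp
    ultimately show "y \<in> {m + r * x |m r. m \<in> M}" by blast
  qed
  moreover have "x \<in> K" unfolding K_def
  proof -
    have "0 \<in> M" using LM by (auto simp: left_ideal_def)
    moreover have "x = 0 + 1*x" by simp
    ultimately show "x \<in> {m + r * x |m r. m \<in> M}" by blast
  qed
  ultimately have "K = UNIV" using mx xM by blast
  then obtain m r where mr: "1 = m + r*x" "m \<in> M" unfolding K_def by blast
  have "m = 1 + (-r)*x" using mr by (simp add: algebra_simps)
  then have "m \<in> units_of_ring" using H by metis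
  then obtain mi where "mi*m = 1" by (auto simp: units_of_ring_def)
  then have "1 \<in> M" using LM mr by (metis left_ideal_def)
  then have "\<forall>y. y \<in> M" using LM by (metis left_ideal_def mult.right_neutral)
  then show False using MU by auto
qed

lemma exists_max:
  fixes L :: "'a::ring_1 set"
  assumes L: "left_ideal L" "1 \<notin> L" shows "\<exists>M. maximal_left_ideal M \<and> L \<subseteq> M"
proof -
  define A where "A = {K. left_ideal K \<and> L \<subseteq> K \<and> (1::'a) \<notin> K}"
  have "\<exists>M\<in>A. \<forall>X\<in>A. M \<subseteq> X \<longrightarrow> X = M"
  proof (rule subset_Zorn_nonempty)
    show "A \<noteq> {}" using L unfolding A_def by auto
  next
    fix C assume C: "C \<noteq> {}" "subset.chain A C"
    then have CA: "C \<subseteq> A" and ch: "\<forall>X\<in>C. \<forall>Y\<in>C. X \<subseteq> Y \<or> Y \<subseteq> X"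
      by (auto simp: subset_chain_def)
    have li: "\<And>K. K \<in> C \<Longrightarrow> left_ideal K" using CA A_def by auto
    have "left_ideal (\<Union>C)" unfolding left_ideal_def
    proof (intro conjI ballI allI)
      obtain K where "K \<in> C" using C by auto
      then show "0 \<in> \<Union>C" using li by (auto simp: left_ideal_def)
    next
      fix a b assume "a \<in> \<Union>C" "b \<in> \<Union>C"
      then obtain K1 K2 where K: "K1 \<in> C" "K2 \<in> C" "a \<in> K1" "b \<in> K2" by auto
      then have "K1 \<subseteq> K2 \<or> K2 \<subseteq> K1" using ch by auto
      then show "a + b \<in> \<Union>C"
      proof
        assume "K1 \<subseteq> K2" then show ?thesis using K li[of K2] by (auto simp: left_ideal_def)
      next
        assume "K2 \<subseteq> K1" then show ?thesis using K li[of K1] by (auto simp: left_ideal_def)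
      qed
    next
      fix a assume "a \<in> \<Union>C" then show "- a \<in> \<Union>C" using li by (auto simp: left_ideal_def)
    next
      fix s a assume "a \<in> \<Union>C" then show "s * a \<in> \<Union>C" using li unfolding left_ideal_def by blast
    qed
    moreover have "L \<subseteq> \<Union>C" using C CA A_def by auto
    moreover have "1 \<notin> \<Union>C" using CA A_def by auto
    ultimately show "\<Union>C \<in> A" unfolding A_def by auto
  qed
  then obtain M where M: "M \<in> A" and mx: "\<forall>X\<in>A. M \<subseteq> X \<longrightarrow> X = M" by blast
  have "maximal_left_ideal M" unfolding maximal_left_ideal_def
  proof (intro conjI allI impI)
    show "left_ideal M" using M A_def by auto
    show "M \<noteq> UNIV" using M A_def by auto
  next
    fix K assume K: "left_ideal K \<and> M \<subseteq> K"
    show "K = M \<or> K = UNIV"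
    proof (cases "1 \<in> K")
      case True
      then have "\<forall>y. y \<in> K" using K by (metis left_ideal_def mult.right_neutral)
      then show ?thesis by auto
    next
      case False
      then have "K \<in> A" using K M A_def by auto
      then show ?thesis using mx K by auto
    qed
  qed
  then show ?thesis using M A_def by auto
qed

lemma left_inv_J:
  fixes x r :: "'a::ring_1"
  assumes "x \<in> jacobson" shows "\<exists>s. s*(1 + r*x) = 1"
proof (rule ccontr)
  assume N: "\<not> (\<exists>s. s*(1 + r*x) = 1)"
  define L where "L = {s*(1 + r*x) | s. True}"
  have "left_ideal L" unfolding left_ideal_def L_def
  proof (intro conjI ballI allI)
    show "0 \<in> {s * (1 + r * x) |s. True}" by (auto intro!: exI[of _ 0])
  next
    fix a b assume "a \<in> {s * (1 + r * x) |s. True}" "b \<in> {s * (1 + r * x) |s. True}"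
    then obtain s1 s2 where "a = s1*(1+r*x)" "b = s2*(1+r*x)" by blast
    then show "a + b \<in> {s * (1 + r * x) |s. True}" by (auto simp: algebra_simps intro!: exI[of _ "s1+s2"])
  next
    fix a assume "a \<in> {s * (1 + r * x) |s. True}"
    then obtain s1 where "a = s1*(1+r*x)" by blast
    then show "- a \<in> {s * (1 + r * x) |s. True}" by (auto simp: algebra_simps intro!: exI[of _ "-s1"])
  next
    fix t a assume "a \<in> {s * (1 + r * x) |s. True}"
    then obtain s1 where "a = s1*(1+r*x)" by blast
    then show "t * a \<in> {s * (1 + r * x) |s. True}" by (auto simp: mult.assoc intro!: exI[of _ "t*s1"])
  qed
  moreover have "1 \<notin> L" using N L_def by auto
  ultimately obtain M where M: "maximal_left_ideal M" "L \<subseteq> M" using exists_max by blast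
  have LM: "left_ideal M" using M by (auto simp: maximal_left_ideal_def)
  have "x \<in> M" using assms M jac_mem by blast
  then have "r*x \<in> M" using LM by (auto simp: left_ideal_def)
  moreover have "1 + r*x \<in> M" using M L_def by (auto intro!: exI[of _ 1])
  ultimately have "1 + r*x - r*x \<in> M" using LM unfolding left_ideal_def by (metis diff_conv_add_uminus)
  then have "1 \<in> M" by simp
  then have "\<forall>y. y \<in> M" using LM by (metis left_ideal_def mult.right_neutral)
  then show False using M by (auto simp: maximal_left_ideal_def)
qed

lemma J_left:
  fixes x s :: "'a::ring_1"
  assumes "x \<in> jacobson" shows "s*x \<in> jacobson"
  using assms by (auto simp: jac_mem maximal_left_ideal_def left_ideal_def)

lemma char_fwd:
  fixes x r :: "'a::ring_1"
  assumes "x \<in> jacobson" shows "1 + r*x \<in> units_of_ring"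
proof -
  obtain s where s: "s*(1 + r*x) = 1" using left_inv_J assms by blast
  have "s = 1 + (-(s*r))*x" using s by (simp add: algebra_simps)
  moreover obtain s' where "s'*(1 + (-(s*r))*x) = 1" using left_inv_J assms by blast
  ultimately have s': "s'*s = 1" by simp
  have "s \<in> units_of_ring" using unit_lr[OF s s'] .
  then obtain si where si: "s*si = 1" "si*s = 1" by (rule unit_invE)
  have "si = si*(s*(1+r*x))" using s by simp
  also have "\<dots> = (si*s)*(1+r*x)" by (simp add: mult.assoc)
  finally have "si = 1 + r*x" using si by simp
  then show ?thesis using si by (auto simp: units_of_ring_def)
qed

lemma J_char: "x \<in> jacobson \<longleftrightarrow> (\<forall>r. 1 + r*x \<in> units_of_ring)"
  using char_fwd char_rev by blast

lemma J_right:
  fixes x s :: "'a::ring_1"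
  assumes "x \<in> jacobson" shows "x*s \<in> jacobson"
proof (rule char_rev, rule allI)
  fix r
  have "1 + (s*r)*x \<in> units_of_ring" using char_fwd assms by blast
  then have "1 + s*(r*x) \<in> units_of_ring" by (simp add: mult.assoc)
  then have "1 + (r*x)*s \<in> units_of_ring" by (rule jac_lemma)
  then show "1 + r*(x*s) \<in> units_of_ring" by (simp add: mult.assoc)
qed

lemma J_sub_Delta:
  fixes x :: "'a::ring_1"
  assumes "x \<in> jacobson" shows "x \<in> Delta"
  unfolding Delta_def
proof clarify
  fix w :: 'a assume w: "w \<in> units_of_ring"
  obtain wi where wi: "w*wi = 1" "wi*w = 1" using w by (rule unit_invE)
  have "1 + wi*x \<in> units_of_ring" using char_fwd assms by blast
  then have "w*(1 + wi*x) \<in> units_of_ring" using w unit_mult by blast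
  moreover have "w*(1 + wi*x) = x + w" using wi by (simp add: algebra_simps mult.assoc[symmetric])
  ultimately show "x + w \<in> units_of_ring" by simp
qed


lemma XY_unit:
  fixes f d d' :: "'a::ring_1"
  assumes f: "f*f = f" and d: "d \<in> Delta" and d': "d' \<in> Delta" and rel: "d + d' + d*d' = 0"
  shows "(1 + f*d*f)*(1 + f*d'*f) \<in> units_of_ring"
proof -
  have s: "d + d' = - (d*d')" using rel by (simp add: eq_neg_iff_add_eq_0)
  have "(1 + f*d*f)*(1 + f*d'*f) = 1 + f*(d+d')*f + f*d*(f*f)*d'*f"
    by (simp add: algebra_simps)
  also have "\<dots> = 1 - f*(d*d')*f + f*d*f*d'*f" using s f by (simp add: mult.assoc)
  also have "\<dots> = 1 + (-(f*d*(1-f)))*(d'*f)" by (simp add: algebra_simps)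
  finally have eq: "(1 + f*d*f)*(1 + f*d'*f) = 1 + (-(f*d*(1-f)))*(d'*f)" .
  have ff: "\<And>x. x*f*f = x*f" by (metis f mult.assoc)
  define n where "n = f*d*(1-f)"
  have nn: "n*n = 0" unfolding n_def
  proof -
    have "(1-f)*f = 0" using f by (simp add: algebra_simps)
    have "f*d*(1-f)*(f*d*(1-f)) = f*d*((1-f)*f)*d*(1-f)" by (simp only: mult.assoc)
    also have "\<dots> = 0" using \<open>(1-f)*f = 0\<close> by simp
    finally show "f*d*(1-f)*(f*d*(1-f)) = 0" .
  qed
  have "(1+n)*(1-n) = 1" "(1-n)*(1+n) = 1" using nn by (simp_all add: algebra_simps)
  then have "1 + n \<in> units_of_ring" by (rule unit_lr)
  then have "d'*(1+n) \<in> Delta" using d' delta_rmult by blast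
  then have "d'*(1+n) - d' \<in> Delta" using d' delta_diff by blast
  then have "d'*n \<in> Delta" by (simp add: algebra_simps)
  then have "- (d'*n) \<in> Delta" by (rule delta_neg)
  then have "1 + - (d'*n) \<in> units_of_ring" by (rule delta_one)
  moreover have "1 + (d'*f)*(-(f*d*(1-f))) = 1 + - (d'*n)" unfolding n_def using ff
    by (simp add: mult.assoc[symmetric])
  ultimately have "1 + (d'*f)*(-(f*d*(1-f))) \<in> units_of_ring" by simp
  then have "1 + (-(f*d*(1-f)))*(d'*f) \<in> units_of_ring" by (rule jac_lemma)
  then show ?thesis using eq by simp
qed

lemma corner_unit:
  fixes f d :: "'a::ring_1"
  assumes f: "f*f = f" and d: "d \<in> Delta"
  shows "1 + f*d*f \<in> units_of_ring"
proof -
  have "1 + d \<in> units_of_ring" using d by (rule delta_one)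
  then obtain vi where vi: "(1+d)*vi = 1" "vi*(1+d) = 1" by (rule unit_invE)
  have viu: "vi \<in> units_of_ring" using vi by (auto simp: units_of_ring_def)
  define d' where "d' = vi - 1"
  have "d' = - (vi*d)" using vi(2) unfolding d'_def by (simp add: algebra_simps eq_diff_eq)
  then have d'D: "d' \<in> Delta" using delta_neg delta_lmult[OF viu d] by simp
  have r1: "d + d' + d*d' = 0" using vi(1) unfolding d'_def by (simp add: algebra_simps)
  have r2: "d' + d + d'*d = 0" using vi(2) unfolding d'_def by (simp add: algebra_simps)
  have P: "(1 + f*d*f)*(1 + f*d'*f) \<in> units_of_ring" using XY_unit[OF f d d'D r1] .
  have Q: "(1 + f*d'*f)*(1 + f*d*f) \<in> units_of_ring" using XY_unit[OF f d'D d r2] .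
  obtain pi where pi: "(1 + f*d*f)*(1 + f*d'*f)*pi = 1" using P by (auto simp: units_of_ring_def)
  obtain qi where qi: "qi*((1 + f*d'*f)*(1 + f*d*f)) = 1" using Q by (auto simp: units_of_ring_def)
  have 1: "(1 + f*d*f)*((1 + f*d'*f)*pi) = 1" using pi by (simp add: mult.assoc)
  have 2: "(qi*(1 + f*d'*f))*(1 + f*d*f) = 1" using qi by (simp add: mult.assoc)
  show ?thesis using 1 2 by (rule unit_lr)
qed

lemma idem_delta:
  fixes f d :: "'a::ring_1"
  assumes f: "f*f = f" and d: "d \<in> Delta"
  shows "f*d \<in> Delta"
  unfolding Delta_def
proof clarify
  fix w :: 'a assume w: "w \<in> units_of_ring"
  obtain wi where wi: "w*wi = 1" "wi*w = 1" using w by (rule unit_invE)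
  have wiu: "wi \<in> units_of_ring" using wi by (auto simp: units_of_ring_def)
  have "d*wi \<in> Delta" using delta_rmult[OF wiu d] .
  then have "1 + f*(d*wi)*f \<in> units_of_ring" using corner_unit[OF f] by blast
  then have "1 + (f*(d*wi))*f \<in> units_of_ring" by (simp only: mult.assoc)
  then have "1 + f*(f*(d*wi)) \<in> units_of_ring" by (rule jac_lemma)
  moreover have "f*(f*(d*wi)) = (f*d)*wi" using f by (metis mult.assoc)
  ultimately have "1 + (f*d)*wi \<in> units_of_ring" by simp
  then have "1 + wi*(f*d) \<in> units_of_ring" by (rule jac_lemma)
  then have "w*(1 + wi*(f*d)) \<in> units_of_ring" using w unit_mult by blast
  moreover have "w*(1 + wi*(f*d)) = f*d + w"
  proof -
    have "w*(1 + wi*(f*d)) = w + (w*wi)*(f*d)" by (simp add: distrib_left mult.assoc)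
    then show ?thesis using wi by simp
  qed
  ultimately show "f*d + w \<in> units_of_ring" by simp
qed

lemma DT_delta_J:
  assumes DT: "DT_ring TYPE('a::ring_1)" and d: "(d::'a) \<in> Delta"
  shows "d \<in> jacobson"
proof (rule char_rev, rule allI)
  fix r :: 'a
  obtain t e where te: "t \<in> tripotents" "e \<in> Delta" "r = t + e"
    using DT unfolding DT_ring_def by blast
  have t3: "t*(t*t) = t" using te(1) by (simp add: tripotents_def power3_eq_cube mult.assoc)
  define v where "v = t - 1 + t*t"
  define g where "g = 1 - t*t"
  have t4: "t*(t*(t*t)) = t*t" using t3 by simp
  have vv: "v*v = 1" unfolding v_def using t3 t4 by (simp add: algebra_simps)
  have vu: "v \<in> units_of_ring" using vv by (auto simp: units_of_ring_def)
  have gg: "g*g = g" unfolding g_def using t4 by (simp add: algebra_simps)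
  have "e + v \<in> units_of_ring" using te(2) vu unfolding Delta_def by blast
  then have 1: "(e + v)*d \<in> Delta" using d delta_rmult delta_lmult by blast
  have 2: "g*d \<in> Delta" using idem_delta[OF gg d] .
  have "r*d = (e+v)*d + g*d" unfolding te(3) v_def g_def by (simp add: algebra_simps)
  then have "r*d \<in> Delta" using delta_add[OF 1 2] by simp
  then show "1 + r*d \<in> units_of_ring" by (rule delta_one)
qed


lemma L1:
  fixes r y :: "'b::ring_1"
  assumes id: "\<And>x::'b. x^4 = x^2" and yy: "y*y = 0"
  shows "(r*y)*(r*y) = 0"
proof -
  define q where "q = y*r*y"
  define e where "e = r*q"
  have e_eq: "e = (r*y)*(r*y)" unfolding e_def q_def by (simp add: mult.assoc)
  have ee: "e*e = e"
  proof -
    have "e*e = (r*y)^4" unfolding e_eq by (simp add: power4_eq_xxxx mult.assoc)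
    also have "\<dots> = (r*y)^2" by (rule id)
    also have "\<dots> = e" unfolding e_eq by (simp add: power2_eq_square)
    finally show ?thesis .
  qed
  have qq: "q*q = 0"
  proof -
    have "q*q = y*r*(y*y)*r*y" unfolding q_def by (simp add: mult.assoc)
    then show ?thesis using yy by simp
  qed
  have eq: "e*q = 0"
  proof -
    have "e*q = r*(q*q)" unfolding e_def by (simp add: mult.assoc)
    then show ?thesis using qq by simp
  qed
  have eqx: "\<And>x. e*(q*x) = 0" using eq by (metis mult.assoc mult_zero_left)
  have eex: "\<And>x. e*(e*x) = e*x" using ee by (metis mult.assoc)
  define a where "a = e*r*(1-e)"
  define b where "b = q*e"
  define c where "c = b*a"
  have R1: "e*a = a" unfolding a_def using eex by (simp add: mult.assoc)
  have R2: "a*e = 0" unfolding a_def using ee by (simp add: mult.assoc algebra_simps)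
  have R3: "a*b = e"
  proof -
    have "a*b = e*(r*q)*e - e*r*(e*q)*e" unfolding a_def b_def by (simp add: algebra_simps mult.assoc)
    also have "\<dots> = e" using eq ee unfolding e_def[symmetric] by simp
    finally show ?thesis .
  qed
  have R4: "e*b = 0" unfolding b_def using eq by (simp add: mult.assoc[symmetric])
  have R5: "b*e = b" unfolding b_def using ee by (simp add: mult.assoc)
  have R6: "b*b = 0" unfolding b_def using eqx by (simp add: mult.assoc)
  have R7: "a*a = 0"
  proof -
    have "a*a = (e*r*(1-e))*e*(r*(1-e))" unfolding a_def by (simp add: mult.assoc)
    also have "\<dots> = 0" using R2 unfolding a_def by simp
    finally show ?thesis .
  qed
  have ax: "\<And>x. a*(a*x) = 0" "\<And>x. a*(b*x) = e*x" "\<And>x. a*(e*x) = 0" "\<And>x. b*(b*x) = 0"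
      "\<And>x. e*(a*x) = a*x" "\<And>x. e*(b*x) = 0" "\<And>x. b*(e*x) = b*x"
    using R1 R2 R3 R4 R5 R6 R7 by (metis mult.assoc mult_zero_left)+
  define x where "x = a + b + c"
  have ex: "e*x = a" unfolding x_def c_def using ax R1 R4 by (simp add: algebra_simps)
  have exx: "e*(x*x) = e + a"
  proof -
    have "e*(x*x) = a*x" using ex by (simp add: mult.assoc[symmetric])
    also have "\<dots> = e + a" unfolding x_def c_def using ax R7 R3 R1 by (simp add: algebra_simps)
    finally show ?thesis .
  qed
  have xe: "x*e = b" unfolding x_def c_def using R2 R5 by (simp add: algebra_simps mult.assoc)
  have xxe: "x*x*e = e + b"
  proof -
    have "x*x*e = x*b" using xe by (simp add: mult.assoc)
    also have "\<dots> = e + b" unfolding x_def c_def using R3 R6 R5 ax by (simp add: algebra_simps mult.assoc)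
    finally show ?thesis .
  qed
  have A1: "e*(x*x)*e = e" using exx R2 ee by (simp add: algebra_simps)
  have A2: "e*(x*x)*(x*x)*e = e + e"
  proof -
    have "e*(x*x)*(x*x)*e = (e*(x*x))*(x*x*e)" by (simp add: mult.assoc)
    also have "\<dots> = (e + a)*(e + b)" using exx xxe by simp
    also have "\<dots> = e + e" using ee R4 R2 R3 by (simp add: algebra_simps)
    finally show ?thesis .
  qed
  have "x^4 = x*x*(x*x)" by (simp add: power4_eq_xxxx mult.assoc)
  moreover have "x^2 = x*x" by (simp add: power2_eq_square)
  ultimately have "x*x*(x*x) = x*x" using id[of x] by simp
  then have "e*(x*x)*(x*x)*e = e*(x*x)*e" by (metis mult.assoc)
  then have "e + e = e" using A1 A2 by simp
  then have "e = 0" by simp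
  then show ?thesis using e_eq by simp
qed


lemma Qlem:
  fixes A :: "'b::ring_1"
  assumes id: "\<And>x::'b. x^4 = x^2" and red: "\<And>y::'b. y*y = 0 \<Longrightarrow> y = 0"
  shows "((A*A + A*A) - (A + A))*((A*A + A*A) - (A + A)) = (A*A + A*A) - (A + A)"
    and "(1 - A*A)*((A*A + A*A) - (A + A)) = 0"
    and "((A*A + A*A) - (A + A))*(1 - A*A) = 0"
    and "A*A - (((A*A + A*A) - (A + A)) + ((A*A + A*A) - (A + A))) = A"
proof -
  have cube: "\<And>x::'b. x*(x*x) = x"
  proof -
    fix x :: 'b
    have x4: "x*(x*(x*x)) = x*x" using id[of x] by (simp add: power4_eq_xxxx power2_eq_square mult.assoc)
    have x6: "x*(x*(x*(x*(x*x)))) = x*x"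
    proof -
      have "x*(x*(x*(x*(x*x)))) = x*(x*(x*(x*x)))*x" by (simp add: mult.assoc)
      also have "\<dots> = x*x" using x4 by (simp add: mult.assoc)
      finally show ?thesis .
    qed
    have x5: "x*(x*(x*(x*x))) = x*(x*x)" using x4 by (simp add: mult.assoc[symmetric])
    have "(x*(x*x) - x)*(x*(x*x) - x) = 0"
      using x4 x5 x6 by (simp add: algebra_simps)
    then have "x*(x*x) - x = 0" by (rule red)
    then show "x*(x*x) = x" by simp
  qed
  have six: "(6::'b) = 0"
  proof -
    have "(2::'b)*(2*2) = 2" by (rule cube)
    then have "(8::'b) = 2" by simp
    moreover have "(6::'b) + 2 = 8" by simp
    ultimately have "(6::'b) + 2 = 0 + 2" by simp
    then show ?thesis by (rule add_right_imp_eq)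
  qed
  have sixz: "\<And>z::'b. z+z+z+z+z+z = 0"
  proof -
    fix z :: 'b
    have "z+z+z+z+z+z = (1+1+1+1+1+1)*z" by (simp only: distrib_right mult_1_left)
    also have "(1+1+1+1+1+1::'b) = 6" by simp
    finally show "z+z+z+z+z+z = 0" using six by simp
  qed
  have c3: "A*(A*A) = A" by (rule cube)
  have c4: "A*(A*(A*A)) = A*A" using c3 by simp
  define w where "w = A - A*A"
  have ww: "w*w = - (w + w)" unfolding w_def using c3 c4 by (simp add: algebra_simps)
  have "(w+w+w)*(w+w+w) = 0"
  proof -
    have "(w+w+w)*(w+w+w) = w*w+w*w+w*w+w*w+w*w+w*w+w*w+w*w+w*w" by (simp add: algebra_simps)
    also have "\<dots> = -((w+w+w+w+w+w) + (w+w+w+w+w+w) + (w+w+w+w+w+w))" unfolding ww by (simp add: algebra_simps)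
    also have "\<dots> = 0" using sixz by simp
    finally show ?thesis .
  qed
  then have w3: "w+w+w = 0" by (rule red)
  have E: "(A*A + A*A) - (A + A) = - (w + w)" unfolding w_def by (simp add: algebra_simps)
  show "((A*A + A*A) - (A + A))*((A*A + A*A) - (A + A)) = (A*A + A*A) - (A + A)"
  proof -
    have "(-(w+w))*(-(w+w)) = w*w+w*w+w*w+w*w" by (simp add: algebra_simps)
    also have "\<dots> = -(w+w+w+w+w+w+w+w)" unfolding ww by (simp add: algebra_simps)
    also have "\<dots> = -(w+w)" using sixz[of w] by (simp add: algebra_simps)
    finally show ?thesis unfolding E .
  qed
  show "(1 - A*A)*((A*A + A*A) - (A + A)) = 0" using c3 c4 by (simp add: algebra_simps)
  show "((A*A + A*A) - (A + A))*(1 - A*A) = 0"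
  proof -
    have c4': "A*(A*(A*A)) = A*A" by (rule c4)
    show ?thesis using c3 c4' by (simp add: algebra_simps)
  qed
  show "A*A - (((A*A + A*A) - (A + A)) + ((A*A + A*A) - (A + A))) = A"
  proof -
    have "A*A - (((A*A + A*A) - (A + A)) + ((A*A + A*A) - (A + A))) = A + (w+w+w)"
      unfolding w_def by (simp add: algebra_simps)
    then show ?thesis using w3 by simp
  qed
qed


definition jrel :: "'a::ring_1 \<Rightarrow> 'a \<Rightarrow> bool" where
  "jrel x y \<longleftrightarrow> x - y \<in> jacobson"

lemma jrel_equivp: "equivp (jrel :: 'a::ring_1 \<Rightarrow> 'a \<Rightarrow> bool)"
proof (rule equivpI)
  show "reflp (jrel :: 'a::ring_1 \<Rightarrow> 'a \<Rightarrow> bool)" by (auto simp: reflp_def jrel_def J_zero)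
  show "symp (jrel :: 'a::ring_1 \<Rightarrow> 'a \<Rightarrow> bool)" unfolding symp_def jrel_def
    by (metis J_neg minus_diff_eq)
  show "transp (jrel :: 'a::ring_1 \<Rightarrow> 'a \<Rightarrow> bool)" unfolding transp_def jrel_def
    by (metis J_add diff_add_cancel add_diff_eq)
qed

quotient_type (overloaded) 'a jq = "'a::ring_1" / jrel
  by (rule jrel_equivp)

lemma one_notin_J: "(1::'a::ring_1) \<notin> jacobson"
proof
  assume "(1::'a) \<in> jacobson"
  then have "1 + (-1)*(1::'a) \<in> units_of_ring" by (rule char_fwd)
  then show False by (auto simp: units_of_ring_def)
qed

instantiation jq :: (ring_1) ring_1
begin
lift_definition zero_jq :: "'a jq" is 0 .
lift_definition one_jq :: "'a jq" is 1 .
lift_definition plus_jq :: "'a jq \<Rightarrow> 'a jq \<Rightarrow> 'a jq" is "(+)"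
proof -
  fix x x' y y' :: 'a assume "jrel x x'" "jrel y y'"
  moreover have "(x+y) - (x'+y') = (x - x') + (y - y')" by (simp add: algebra_simps)
  ultimately show "jrel (x+y) (x'+y')" unfolding jrel_def using J_add by metis
qed
lift_definition uminus_jq :: "'a jq \<Rightarrow> 'a jq" is uminus
proof -
  fix x x' :: 'a assume "jrel x x'"
  moreover have "(-x) - (-x') = - (x - x')" by (simp add: algebra_simps)
  ultimately show "jrel (-x) (-x')" unfolding jrel_def using J_neg by metis
qed
lift_definition minus_jq :: "'a jq \<Rightarrow> 'a jq \<Rightarrow> 'a jq" is "(-)"
proof -
  fix x x' y y' :: 'a assume "jrel x x'" "jrel y y'"
  moreover have "(x-y) - (x'-y') = (x - x') - (y - y')" by (simp add: algebra_simps)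
  ultimately show "jrel (x-y) (x'-y')" unfolding jrel_def using J_diff by metis
qed
lift_definition times_jq :: "'a jq \<Rightarrow> 'a jq \<Rightarrow> 'a jq" is "(*)"
proof -
  fix x x' y y' :: 'a
  assume "jrel x x'" "jrel y y'"
  then have a: "x - x' \<in> jacobson" "y - y' \<in> jacobson" by (auto simp: jrel_def)
  have "x*y - x'*y' = x*(y - y') + (x - x')*y'" by (simp add: algebra_simps)
  moreover have "x*(y - y') \<in> jacobson" using J_left a by blast
  moreover have "(x - x')*y' \<in> jacobson" using J_right a by blast
  ultimately show "jrel (x*y) (x'*y')" unfolding jrel_def using J_add by metis
qed
instance
proof
  fix a b c :: "'a jq"
  show "a + b + c = a + (b + c)" by transfer (simp add: jrel_def J_zero add.assoc)
  show "a + b = b + a" by transfer (simp add: jrel_def J_zero add.commute)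
  show "0 + a = a" by transfer (simp add: jrel_def J_zero)
  show "- a + a = 0" by transfer (simp add: jrel_def J_zero)
  show "a - b = a + - b" by transfer (simp add: jrel_def J_zero)
  show "a * b * c = a * (b * c)" by transfer (simp add: jrel_def J_zero mult.assoc)
  show "(a + b) * c = a * c + b * c" by transfer (simp add: jrel_def J_zero distrib_right)
  show "a * (b + c) = a * b + a * c" by transfer (simp add: jrel_def J_zero distrib_left)
  show "1 * a = a" by transfer (simp add: jrel_def J_zero)
  show "a * 1 = a" by transfer (simp add: jrel_def J_zero)
  show "(0::'a jq) \<noteq> 1" by transfer (metis jrel_def one_notin_J J_neg diff_0 minus_minus)
qed
end

lift_definition pj :: "'a::ring_1 \<Rightarrow> 'a jq" is "\<lambda>x. x" .

lemma pj_add: "pj (x + y) = pj x + pj y" by transfer (simp add: jrel_def J_zero)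
lemma pj_mult: "pj (x * y) = pj x * pj y" by transfer (simp add: jrel_def J_zero)
lemma pj_diff: "pj (x - y) = pj x - pj y" by transfer (simp add: jrel_def J_zero)
lemma pj_one: "pj 1 = 1" by transfer (simp add: jrel_def J_zero)
lemma pj_zero: "pj 0 = 0" by transfer (simp add: jrel_def J_zero)
lemma pj_eq: "pj x = pj y \<longleftrightarrow> x - y \<in> jacobson" by transfer (simp add: jrel_def)
lemma pj_eq0: "pj x = 0 \<longleftrightarrow> x \<in> jacobson" by transfer (simp add: jrel_def)
lemma pj_surj: "\<exists>x. X = pj x" by transfer (metis jrel_def J_zero diff_self)


lemma pj_pow: "pj (x^n) = (pj x)^n"
  by (induction n) (simp_all add: pj_one pj_mult)

lemma one_minus_J_unit:
  fixes z :: "'a::ring_1"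
  assumes "z \<in> jacobson" shows "1 - z \<in> units_of_ring"
  using char_fwd[OF assms, of "-1"] by simp

lemma lift_under:
  fixes f h :: "'a::ring_1"
  assumes ff: "f*f = f" and hh: "h*h = h" and J1: "(1-f)*h \<in> jacobson" and J2: "h*(1-f) \<in> jacobson"
  shows "\<exists>g. g*g = g \<and> f*g = g \<and> g*f = g \<and> g - h \<in> jacobson"
proof -
  define u where "u = 1 - (1-f)*h"
  have uU: "u \<in> units_of_ring" unfolding u_def using one_minus_J_unit[OF J1] .
  obtain ui where ui: "u*ui = 1" "ui*u = 1" using uU by (rule unit_invE)
  have uh: "u*h = f*h" unfolding u_def using hh by (simp add: algebra_simps mult.assoc)
  have fu: "f*u = f" unfolding u_def using ff by (simp add: algebra_simps mult.assoc[symmetric])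
  define g0 where "g0 = u*h*ui"
  have g0': "g0 = f*h*ui" unfolding g0_def using uh by simp
  have g0g0: "g0*g0 = g0"
  proof -
    have "g0*g0 = u*h*(ui*u)*h*ui" unfolding g0_def by (simp add: mult.assoc)
    also have "\<dots> = g0" unfolding g0_def using ui hh by (simp add: mult.assoc)
    finally show ?thesis .
  qed
  have fg0: "f*g0 = g0" unfolding g0' using ff by (simp add: mult.assoc[symmetric])
  define g where "g = g0*f"
  have gg: "g*g = g"
  proof -
    have "g*g = g0*(f*g0)*f" unfolding g_def by (simp add: mult.assoc)
    then show ?thesis using fg0 g0g0 unfolding g_def by simp
  qed
  have fg: "f*g = g" unfolding g_def using fg0 by (simp add: mult.assoc[symmetric])
  have gf: "g*f = g" unfolding g_def using ff by (simp add: mult.assoc)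
  have pu: "pj u = 1"
  proof -
    have "pj ((1-f)*h) = 0" using J1 pj_eq0 by blast
    then show ?thesis unfolding u_def by (simp add: pj_diff pj_one)
  qed
  have pui: "pj ui = 1"
  proof -
    have "pj ui = pj ui * pj u" using pu by simp
    also have "\<dots> = 1" using ui by (simp add: pj_mult[symmetric] pj_one)
    finally show ?thesis .
  qed
  have phf: "pj h * pj f = pj h"
  proof -
    have "pj (h*(1-f)) = 0" using J2 pj_eq0 by blast
    then have "pj h - pj h * pj f = 0" by (simp add: pj_mult pj_diff pj_one algebra_simps)
    then show ?thesis by simp
  qed
  have "pj g = pj h" unfolding g_def g0_def using pu pui phf by (simp add: pj_mult)
  then have "g - h \<in> jacobson" using pj_eq by blast
  then show ?thesis using gg fg gf by blast
qed

lemma H_imp_semi: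
  assumes H: "\<forall>a::'a::ring_1. \<exists>e j. e * e = e \<and> j \<in> jacobson \<and> a ^ 2 = e + j"
  shows "semi_tripotent TYPE('a)"
proof -
  have lift: "\<And>x::'a. \<exists>e. e*e = e \<and> pj e = pj x * pj x"
  proof -
    fix x :: 'a
    obtain e j where ej: "e*e = e" "j \<in> jacobson" "x^2 = e + j" using H by blast
    have "pj (x*x) = pj e" using ej by (simp add: pj_eq power2_eq_square)
    then show "\<exists>e. e*e = e \<and> pj e = pj x * pj x" using ej(1) by (auto simp: pj_mult)
  qed
  have idQ: "\<And>X::'a jq. X^4 = X^2"
  proof -
    fix X :: "'a jq"
    obtain x where X: "X = pj x" using pj_surj by blast
    obtain e where e: "e*e = e" "pj e = X * X" using lift[of x] X by blast
    have "X^4 = (X*X)*(X*X)" by (simp add: power4_eq_xxxx mult.assoc)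
    also have "\<dots> = pj (e*e)" using e(2) by (simp only: pj_mult)
    also have "\<dots> = X^2" using e by (simp add: power2_eq_square)
    finally show "X^4 = X^2" .
  qed
  have redQ: "\<And>Y::'a jq. Y*Y = 0 \<Longrightarrow> Y = 0"
  proof -
    fix Y :: "'a jq" assume YY: "Y*Y = 0"
    obtain y where Y: "Y = pj y" using pj_surj by blast
    have "y \<in> jacobson"
    proof (rule char_rev, rule allI)
      fix r :: 'a
      have "(pj r * Y)*(pj r * Y) = 0" using L1[OF idQ YY] .
      then have z: "(r*y)*(r*y) \<in> jacobson" using Y by (simp add: pj_mult[symmetric] pj_eq0)
      have "1 - (r*y)*(r*y) \<in> units_of_ring" using one_minus_J_unit[OF z] .
      then obtain zi where zi: "(1 - (r*y)*(r*y))*zi = 1" "zi*(1 - (r*y)*(r*y)) = 1" by (rule unit_invE)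
      have e1: "(1 + r*y)*(1 - r*y) = 1 - (r*y)*(r*y)" by (simp add: algebra_simps)
      have e2: "(1 - r*y)*(1 + r*y) = 1 - (r*y)*(r*y)" by (simp add: algebra_simps)
      have "(1 + r*y)*((1 - r*y)*zi) = 1" using e1 zi by (simp add: mult.assoc[symmetric])
      moreover have "(zi*(1 - r*y))*(1 + r*y) = 1" using e2 zi by (simp add: mult.assoc)
      ultimately show "1 + r*y \<in> units_of_ring" by (rule unit_lr)
    qed
    then show "Y = 0" using Y pj_eq0 by blast
  qed
  show ?thesis unfolding semi_tripotent_def
  proof
    fix a :: 'a
    define A where "A = pj a"
    note Q = Qlem[OF idQ redQ, of A]
    obtain f where f: "f*f = f" "pj f = A*A" using lift[of a] A_def by blast
    define b where "b = (a*a + a*a) - (a + a)"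
    have pb: "pj b = (A*A + A*A) - (A + A)" unfolding b_def A_def by (simp add: pj_add pj_diff pj_mult)
    obtain h where h: "h*h = h" "pj h = pj b * pj b" using lift[of b] by blast
    have ph: "pj h = (A*A + A*A) - (A + A)" using h(2) pb Q(1) by simp
    have J1: "(1-f)*h \<in> jacobson" using Q(2) f(2) ph by (simp add: pj_eq0[symmetric] pj_mult pj_diff pj_one)
    have J2: "h*(1-f) \<in> jacobson" using Q(3) f(2) ph by (simp add: pj_eq0[symmetric] pj_mult pj_diff pj_one)
    obtain g where g: "g*g = g" "f*g = g" "g*f = g" "g - h \<in> jacobson"
      using lift_under[OF f(1) h(1) J1 J2] by blast
    define t where "t = f - (g + g)"
    have gx: "\<And>x. g*(g*x) = g*x" "\<And>x. f*(g*x) = g*x" "\<And>x. g*(f*x) = g*x" "\<And>x. f*(f*x) = f*x"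
      using g f by (metis mult.assoc)+
    have tt: "t*t = f" unfolding t_def using g f gx by (simp add: algebra_simps)
    have ttt: "t*t*t = t" unfolding tt unfolding t_def using g f gx by (simp add: algebra_simps)
    have tT: "t \<in> tripotents" unfolding tripotents_def using ttt by (simp add: power3_eq_cube)
    have "pj g = pj h" using g(4) pj_eq by blast
    then have "pj t = A" unfolding t_def using f(2) ph Q(4) by (simp add: pj_diff pj_add)
    then have "a - t \<in> jacobson" using pj_eq A_def by metis
    then show "\<exists>e j. e \<in> tripotents \<and> j \<in> jacobson \<and> a = e + j" using tT
      by (intro exI[of _ t] exI[of _ "a - t"]) simp
  qed
qed

theorem theorem4p11:
  shows "(DT_ring TYPE('a::ring_1) \<longleftrightarrow> semi_tripotent TYPE('a))
       \<and> (semi_tripotent TYPE('a) \<longleftrightarrow>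
           (\<forall>a::'a. \<exists>e j. e * e = e \<and> j \<in> jacobson \<and> a ^ 2 = e + j))"
proof (intro conjI iffI)
  assume DT: "DT_ring TYPE('a)"
  show "semi_tripotent TYPE('a)" unfolding semi_tripotent_def
  proof
    fix r :: 'a
    obtain e d where "e \<in> tripotents" "d \<in> Delta" "r = e + d" using DT unfolding DT_ring_def by blast
    then show "\<exists>e j. e \<in> tripotents \<and> j \<in> jacobson \<and> r = e + j" using DT_delta_J[OF DT] by blast
  qed
next
  assume "semi_tripotent TYPE('a)"
  then show "DT_ring TYPE('a)" unfolding semi_tripotent_def DT_ring_def using J_sub_Delta by blast
next
  assume S: "semi_tripotent TYPE('a)"
  show "\<forall>a::'a. \<exists>e j. e * e = e \<and> j \<in> jacobson \<and> a ^ 2 = e + j"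
  proof
    fix a :: 'a
    obtain t j where tj: "t \<in> tripotents" "j \<in> jacobson" "a = t + j" using S unfolding semi_tripotent_def by blast
    have t3: "t*(t*t) = t" using tj(1) by (simp add: tripotents_def power3_eq_cube mult.assoc)
    have "(t*t)*(t*t) = t*(t*(t*t))" by (simp add: mult.assoc)
    then have ee: "(t*t)*(t*t) = t*t" using t3 by simp
    have "t*j + j*t + j*j \<in> jacobson" using tj(2) J_left J_right J_add by metis
    moreover have "a^2 = t*t + (t*j + j*t + j*j)" unfolding tj(3) by (simp add: power2_eq_square algebra_simps)
    ultimately show "\<exists>e j. e * e = e \<and> j \<in> jacobson \<and> a ^ 2 = e + j" using ee by blast
  qed
next
  assume "\<forall>a::'a. \<exists>e j. e * e = e \<and> j \<in> jacobson \<and> a ^ 2 = e + j"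
  then show "semi_tripotent TYPE('a)" by (rule H_imp_semi)
qed

end
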